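(* Let $a,b,c\in\mathbb{R}$, $1\le p<\infty$, $0<q,r<\infty$. (i) If $\frac{a+N}{q}\ne\frac{b-p+N}{p}$ and $W^{1,(q,p)}_{\{a,b\}}(\mathbb{R}^N_* )$ is continuously embedded into $L^r(\mathbb{R}^N;|x|^cdx)$, then $\theta_c\in[0,1]$ and $\theta_c\left(\frac1p-\frac1N-\frac1q\right)\le\frac1r-\frac1q$. In particular $r\le\max\{p^*,q\}$. (ii) If $\frac{a+N}{q}=\frac{b-p+N}{p}$, $c=c^0$, and $W^{1,(q,p)}_{\{a,b\}}(\mathbb{R}^N_* )$ is continuously embedded into $L^r(\mathbb{R}^N;|x|^cdx)$, then $r\le\max\{p^*,q\}$.
   Context: $N\ge1$, $\mathbb{R}^N_*:=\mathbb{R}^N\setminus\{0\}$. For $d\in\mathbb{R}$, $0<s<\infty$, $\|u\|_{d,s}:=(\int_{\mathbb{R}^N}|x|^d|u|^s dx)^{1/s}$ ($\{0\}$ of measure $0$; Euclidean norm for vector-valued $u$), $L^s(\mathbb{R}^N;|x|^ddx)$ the measurable $u$ with $\|u\|_{d,s}<\infty$. $W^{1,(q,p)}_{\{a,b\}}(\mathbb{R}^N_* )$: $u\in L^1_{loc}(\mathbb{R}^N_* )$ with $\|u\|_{a,q},\|\nabla u\|_{b,p}<\infty$ (distributional gradient on $\mathbb{R}^N_*$), (quasi-)norm $\|u\|_{a,q}+\|\nabla u\|_{b,p}$. $p^*:=\infty$ if $p\ge N$, $p^*:=Np/(N-p)$ if $p<N$. $c^0:=\frac{r(a+N)}{q}-N$,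 $c^1:=\frac{r(b-p+N)}{p}-N$, $\theta_c:=\frac{c-c^0}{c^1-c^0}$ when $c^0\neq c^1$. *)

theory Defs
  imports "HOL-Analysis.Analysis"
begin

definition pd :: "'a::euclidean_space \<Rightarrow> ('a \<Rightarrow> real) \<Rightarrow> 'a \<Rightarrow> real" where
  "pd i f x = frechet_derivative f (at x) i"

fun iter_pd :: "'a::euclidean_space list \<Rightarrow> ('a \<Rightarrow> real) \<Rightarrow> 'a \<Rightarrow> real" where
  "iter_pd [] f = f"
| "iter_pd (i # is) f = pd i (iter_pd is f)"

definition smooth_fun :: "('a::euclidean_space \<Rightarrow> real) \<Rightarrow> bool" where
  "smooth_fun f \<longleftrightarrow> (\<forall>is. set is \<subseteq> Basis \<longrightarrow> (\<forall>x. iter_pd is f differentiable (at x)))"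

definition test_fun_punct :: "('a::euclidean_space \<Rightarrow> real) \<Rightarrow> bool" where
  "test_fun_punct \<phi> \<longleftrightarrow> smooth_fun \<phi> \<and> compact (closure {x. \<phi> x \<noteq> 0})
      \<and> 0 \<notin> closure {x. \<phi> x \<noteq> 0}"

definition loc_int_punct :: "('a::euclidean_space \<Rightarrow> 'b::{banach,second_countable_topology}) \<Rightarrow> bool" where
  "loc_int_punct u \<longleftrightarrow> (\<forall>K. compact K \<and> 0 \<notin> K \<longrightarrow> set_integrable lebesgue K u)"

definition weak_grad_punct :: "('a::euclidean_space \<Rightarrow> real) \<Rightarrow> ('a \<Rightarrow> 'a) \<Rightarrow> bool" where
  "weak_grad_punct u g \<longleftrightarrow> loc_int_punct u \<and> loc_int_punct g \<and>
     (\<forall>\<phi>. test_fun_punct \<phi> \<longrightarrow> (\<forall>i\<in>Basis.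
        (\<integral>x. u x * pd i \<phi> x \<partial>lebesgue) = - (\<integral>x. (g x \<bullet> i) * \<phi> x \<partial>lebesgue)))"

definition wint :: "real \<Rightarrow> real \<Rightarrow> ('a::euclidean_space \<Rightarrow> 'b::real_normed_vector) \<Rightarrow> ennreal" where
  "wint d s u = (\<integral>\<^sup>+x. ennreal (norm x powr d * norm (u x) powr s) \<partial>lebesgue)"

definition in_wL :: "real \<Rightarrow> real \<Rightarrow> ('a::euclidean_space \<Rightarrow> 'b::{real_normed_vector,second_countable_topology}) \<Rightarrow> bool" where
  "in_wL d s u \<longleftrightarrow> u \<in> borel_measurable lebesgue \<and> wint d s u < \<infinity>"

definition wnorm :: "real \<Rightarrow> real \<Rightarrow> ('a::euclidean_space \<Rightarrow> 'b::real_normed_vector) \<Rightarrow> real" where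
  "wnorm d s u = enn2real (wint d s u) powr (1 / s)"

text \<open>Continuous embedding of W^{1,(q,p)}_{a,b}(R^N_*) into L^r(R^N;|x|^c dx).\<close>
definition W_embeds :: "'a::euclidean_space itself \<Rightarrow> real \<Rightarrow> real \<Rightarrow> real \<Rightarrow> real \<Rightarrow> real \<Rightarrow> real \<Rightarrow> bool" where
  "W_embeds _ a b q p c r \<longleftrightarrow> (\<exists>C. \<forall>(u::'a \<Rightarrow> real) g. weak_grad_punct u g \<and> in_wL a q u \<and> in_wL b p g
      \<longrightarrow> in_wL c r u \<and> wnorm c r u \<le> C * (wnorm a q u + wnorm b p g))"

definition sob_exp :: "real \<Rightarrow> nat \<Rightarrow> ereal" where
  "sob_exp p N = (if p \<ge> real N then \<infinity> else ereal (real N * p / (real N - p)))"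

definition c0 :: "nat \<Rightarrow> real \<Rightarrow> real \<Rightarrow> real \<Rightarrow> real" where
  "c0 N a q r = r * (a + real N) / q - real N"

definition c1 :: "nat \<Rightarrow> real \<Rightarrow> real \<Rightarrow> real \<Rightarrow> real" where
  "c1 N b p r = r * (b - p + real N) / p - real N"

definition theta :: "nat \<Rightarrow> real \<Rightarrow> real \<Rightarrow> real \<Rightarrow> real \<Rightarrow> real \<Rightarrow> real \<Rightarrow> real" where
  "theta N a b q p r c = (c - c0 N a q r) / (c1 N b p r - c0 N a q r)"

end

theory Submission
  imports Defs
begin


lemma small_t_bound:
  fixes e M :: real
  assumes H: "\<And>t. 0 < t \<Longrightarrow> t \<le> 1/2 \<Longrightarrow> t powr e \<le> M"
  shows "0 \<le> e"
proof (rule ccontr)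
  assume "\<not> 0 \<le> e" hence e: "e < 0" by simp
  define M' where "M' = max M 1 + 1"
  have M': "M' > 1" "M' > M" unfolding M'_def by auto
  define t where "t = min (1/2) (M' powr (1/e))"
  have tpos: "t > 0" using M' by (simp add: t_def)
  have "t \<le> 1/2" by (simp add: t_def)
  hence "t powr e \<le> M" using H tpos by simp
  moreover have "t \<le> M' powr (1/e)" by (simp add: t_def)
  hence "(M' powr (1/e)) powr e \<le> t powr e"
    using e tpos by (intro powr_mono2') auto
  hence "M' \<le> t powr e" using e M' by (simp add: powr_powr)
  ultimately show False using M' by simp
qed

lemma large_R_bound:
  fixes e M :: real
  assumes H: "\<And>R. 1 \<le> R \<Longrightarrow> R powr e \<le> M"
  shows "e \<le> 0"
proof -
  have "0 \<le> -e"
  proof (rule small_t_bound[where M=M])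
    fix t :: real assume t: "0 < t" "t \<le> 1/2"
    have "(1/t) powr e \<le> M" using H t by simp
    thus "t powr (-e) \<le> M" using t by (simp add: powr_minus powr_divide inverse_eq_divide)
  qed
  thus ?thesis by simp
qed

lemma real_main_lt:
  fixes K xa xb xc \<alpha> \<beta> \<gamma> :: real
  assumes H: "\<And>R t. 0 < R \<Longrightarrow> 0 < t \<Longrightarrow> t \<le> 1/2 \<Longrightarrow>
      t powr xa * R powr \<alpha> \<le> K * (t powr xb * R powr \<beta> + t powr xc * R powr \<gamma>)"
  and lt: "\<beta> < \<gamma>"
  shows "(\<alpha>-\<beta>)/(\<gamma>-\<beta>) \<in> {0..1} \<and> (\<alpha>-\<beta>)/(\<gamma>-\<beta>)*(xc-xb) \<le> xa - xb"
proof -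
  define h :: real where "h = 1/2"
  have hp: "0 < h" "h \<le> 1/2" by (auto simp: h_def)
  have hx: "\<And>x. h powr x > 0" using hp by simp
  have "\<alpha> - \<gamma> \<le> 0"
  proof (rule large_R_bound[where M = "K * (h powr xb + h powr xc) / h powr xa"])
    fix R :: real assume R: "1 \<le> R"
    have "R powr \<beta> \<le> R powr \<gamma>" using R lt by (intro powr_mono) auto
    have 1: "h powr xa * R powr \<alpha> \<le> K * (h powr xb * R powr \<beta> + h powr xc * R powr \<gamma>)"
      using H[of R h] R hp by simp
    have K0: "K \<ge> 0"
    proof (rule ccontr)
      assume "\<not> K \<ge> 0"
      hence "K * (h powr xb * R powr \<beta> + h powr xc * R powr \<gamma>) < 0"
        using R hp by (intro mult_neg_pos) (auto intro!: add_pos_pos)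
      moreover have "h powr xa * R powr \<alpha> > 0" using R hp by simp
      ultimately show False using 1 by simp
    qed
    have "K * (h powr xb * R powr \<beta> + h powr xc * R powr \<gamma>) \<le> K * (h powr xb * R powr \<gamma> + h powr xc * R powr \<gamma>)"
      using K0 \<open>R powr \<beta> \<le> R powr \<gamma>\<close> hx by (intro mult_left_mono add_mono mult_left_mono) auto
    with 1 have "h powr xa * R powr \<alpha> \<le> K * (h powr xb + h powr xc) * R powr \<gamma>"
      by (simp add: algebra_simps)
    hence "R powr \<alpha> / R powr \<gamma> \<le> K * (h powr xb + h powr xc) / h powr xa"
      using R hx[of xa] by (simp add: field_simps)
    thus "R powr (\<alpha> - \<gamma>) \<le> K * (h powr xb + h powr xc) / h powr xa"
      using R by (simp add: powr_diff)
  qed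
  moreover have "0 \<le> \<alpha> - \<beta>"
  proof (rule small_t_bound[where M = "K * (h powr xb + h powr xc) / h powr xa"])
    fix R :: real assume R: "0 < R" "R \<le> 1/2"
    have "R powr \<gamma> \<le> R powr \<beta>" using R lt by (intro powr_mono') auto
    have 1: "h powr xa * R powr \<alpha> \<le> K * (h powr xb * R powr \<beta> + h powr xc * R powr \<gamma>)"
      using H[of R h] R hp by simp
    have K0: "K \<ge> 0"
    proof (rule ccontr)
      assume "\<not> K \<ge> 0"
      hence "K * (h powr xb * R powr \<beta> + h powr xc * R powr \<gamma>) < 0"
        using R hp by (intro mult_neg_pos) (auto intro!: add_pos_pos)
      moreover have "h powr xa * R powr \<alpha> > 0" using R hp by simp
      ultimately show False using 1 by simp
    qed
    have "K * (h powr xb * R powr \<beta> + h powr xc * R powr \<gamma>) \<le> K * (h powr xb * R powr \<beta> + h powr xc * R powr \<beta>)"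
      using K0 \<open>R powr \<gamma> \<le> R powr \<beta>\<close> hx by (intro mult_left_mono add_mono mult_left_mono) auto
    with 1 have "h powr xa * R powr \<alpha> \<le> K * (h powr xb + h powr xc) * R powr \<beta>"
      by (simp add: algebra_simps)
    hence "R powr \<alpha> / R powr \<beta> \<le> K * (h powr xb + h powr xc) / h powr xa"
      using R hx[of xa] by (simp add: field_simps)
    thus "R powr (\<alpha> - \<beta>) \<le> K * (h powr xb + h powr xc) / h powr xa"
      using R by (simp add: powr_diff)
  qed
  ultimately have th: "(\<alpha>-\<beta>)/(\<gamma>-\<beta>) \<in> {0..1}" using lt by (auto simp: field_simps)
  define \<theta> where "\<theta> = (\<alpha>-\<beta>)/(\<gamma>-\<beta>)"
  have \<theta>eq: "\<alpha> - \<beta> = \<theta> * (\<gamma> - \<beta>)" using lt by (simp add: \<theta>_def)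
  have "0 \<le> xa + \<theta> * (xb - xc) - xb"
  proof (rule small_t_bound[where M = "2*K"])
    fix t :: real assume t: "0 < t" "t \<le> 1/2"
    define R where "R = t powr ((xb - xc)/(\<gamma> - \<beta>))"
    have R: "R > 0" using t by (simp add: R_def)
    have Rg: "R powr (\<gamma> - \<beta>) = t powr (xb - xc)" using lt t by (simp add: R_def powr_powr)
    have Ra: "R powr (\<alpha> - \<beta>) = t powr (\<theta> * (xb - xc))" using lt t
      by (simp add: R_def powr_powr \<theta>eq mult.commute)
    have e1: "t powr xc * R powr \<gamma> = t powr xb * R powr \<beta>"
    proof -
      have "R powr \<gamma> = R powr \<beta> * R powr (\<gamma> - \<beta>)" by (simp add: powr_add[symmetric])
      thus ?thesis using Rg R t by (simp add: powr_diff field_simps)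
    qed
    have e2: "R powr \<alpha> = R powr \<beta> * t powr (\<theta> * (xb - xc))"
      using Ra by (metis add_diff_cancel_left' diff_add_cancel powr_add)
    have "t powr xa * (R powr \<beta> * t powr (\<theta> * (xb - xc))) \<le> K * (2 * (t powr xb * R powr \<beta>))"
      using H[OF R t] e1 e2 by (simp add: ac_simps)
    hence "t powr xa * t powr (\<theta> * (xb - xc)) / t powr xb \<le> 2 * K"
      using R t by (simp add: field_simps)
    thus "t powr (xa + \<theta> * (xb - xc) - xb) \<le> 2 * K"
      using t by (simp add: powr_add powr_diff)
  qed
  hence "\<theta>*(xc-xb) \<le> xa - xb" by (simp add: algebra_simps)
  thus ?thesis using th unfolding \<theta>_def by blast
qed

lemma real_main_ne:
  fixes K xa xb xc \<alpha> \<beta> \<gamma> :: real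
  assumes H: "\<And>R t. 0 < R \<Longrightarrow> 0 < t \<Longrightarrow> t \<le> 1/2 \<Longrightarrow>
      t powr xa * R powr \<alpha> \<le> K * (t powr xb * R powr \<beta> + t powr xc * R powr \<gamma>)"
  and ne: "\<beta> \<noteq> \<gamma>"
  shows "(\<alpha>-\<beta>)/(\<gamma>-\<beta>) \<in> {0..1} \<and> (\<alpha>-\<beta>)/(\<gamma>-\<beta>)*(xc-xb) \<le> xa - xb"
proof (cases "\<beta> < \<gamma>")
  case True thus ?thesis using real_main_lt[OF H] by blast
next
  case False
  hence lt: "\<gamma> < \<beta>" using ne by simp
  have "(\<alpha>-\<gamma>)/(\<beta>-\<gamma>) \<in> {0..1} \<and> (\<alpha>-\<gamma>)/(\<beta>-\<gamma>)*(xb-xc) \<le> xa - xc"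
  proof -
    have H': "\<And>R t. 0 < R \<Longrightarrow> 0 < t \<Longrightarrow> t \<le> 1/2 \<Longrightarrow>
      t powr xa * R powr \<alpha> \<le> K * (t powr xc * R powr \<gamma> + t powr xb * R powr \<beta>)"
      using H by (simp add: add.commute)
    show ?thesis using real_main_lt[OF H' lt] by simp
  qed
  moreover have "(\<alpha>-\<beta>)/(\<gamma>-\<beta>) = 1 - (\<alpha>-\<gamma>)/(\<beta>-\<gamma>)" using lt by (simp add: field_simps)
  moreover have "\<And>u::real. u \<in> {0..1} \<and> u*(xb-xc) \<le> xa - xc \<Longrightarrow> (1-u) \<in> {0..1} \<and> (1-u)*(xc-xb) \<le> xa - xb"
    by (auto simp: algebra_simps)
  ultimately show ?thesis by metis
qed

lemma real_main_eq:
  fixes K xa xb xc :: real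
  assumes H: "\<And>t. 0 < t \<Longrightarrow> t \<le> 1/2 \<Longrightarrow> t powr xa \<le> K * (t powr xb + t powr xc)"
  shows "min xb xc \<le> xa"
proof -
  have "0 \<le> xa - min xb xc"
  proof (rule small_t_bound[where M = "2*K"])
    fix t :: real assume t: "0 < t" "t \<le> 1/2"
    have 1: "t powr xa \<le> K * (t powr xb + t powr xc)" using H t by simp
    have K0: "K \<ge> 0"
    proof (rule ccontr)
      assume "\<not> K \<ge> 0"
      hence "K * (t powr xb + t powr xc) < 0" using t by (intro mult_neg_pos) (auto intro!: add_pos_pos)
      thus False using 1 t by (smt (verit) powr_gt_zero)
    qed
    have "t powr xb \<le> t powr min xb xc" "t powr xc \<le> t powr min xb xc"
      using t by (auto intro!: powr_mono')
    hence "K * (t powr xb + t powr xc) \<le> K * (2 * t powr min xb xc)" using K0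
      by (intro mult_left_mono) auto
    hence "t powr xa \<le> 2 * K * t powr min xb xc" using 1 by simp
    hence "t powr xa / t powr min xb xc \<le> 2 * K" using t by (simp add: field_simps)
    thus "t powr (xa - min xb xc) \<le> 2*K" using t by (simp add: powr_diff)
  qed
  thus ?thesis by simp
qed



lemma dir_deriv:
  fixes w :: "'a::euclidean_space \<Rightarrow> real"
  assumes wd: "\<And>x. (w has_derivative w' x) (at x)"
  shows "((\<lambda>s. w (x + s *\<^sub>R i)) has_real_derivative w' (x + t *\<^sub>R i) i) (at t)"
proof -
  have 1: "((\<lambda>s. x + s *\<^sub>R i) has_derivative (\<lambda>h. h *\<^sub>R i)) (at t)"
    by (auto intro!: derivative_eq_intros)
  have 2: "((\<lambda>s. w (x + s *\<^sub>R i)) has_derivative (\<lambda>h. w' (x + t *\<^sub>R i) (h *\<^sub>R i))) (at t)"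
    using has_derivative_compose[OF 1 wd] .
  have lin: "linear (w' (x + t *\<^sub>R i))" using wd has_derivative_linear by blast
  have "(\<lambda>h. w' (x + t *\<^sub>R i) (h *\<^sub>R i)) = (*) (w' (x + t *\<^sub>R i) i)"
    using linear_cmul[OF lin] by (auto simp: fun_eq_iff mult.commute)
  with 2 show ?thesis by (simp add: has_field_derivative_def)
qed

lemma translate_integral:
  fixes w :: "'a::euclidean_space \<Rightarrow> real"
  assumes [measurable]: "w \<in> borel_measurable borel"
  shows "integral\<^sup>L lborel (\<lambda>x. w (c + x)) = integral\<^sup>L lborel w"
proof -
  have "integral\<^sup>L lborel w = integral\<^sup>L (distr lborel borel ((+) c)) w"
    by (simp add: lborel_distr_plus)
  also have "\<dots> = integral\<^sup>L lborel (\<lambda>x. w (c + x))"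
    by (subst integral_distr) auto
  finally show ?thesis by simp
qed

lemma ibp_zero:
  fixes w D :: "'a::euclidean_space \<Rightarrow> real" and i :: 'a
  assumes wd: "\<And>x. (w has_derivative w' x) (at x)"
  and Dd: "\<And>x. D x = w' x i"
  and Dc: "continuous_on UNIV D"
  and K: "compact K" and supp: "\<And>x. x \<notin> K \<Longrightarrow> w x = 0"
  shows "integrable lborel D \<and> integral\<^sup>L lborel D = 0"
proof -
  have wc: "continuous_on UNIV w"
    using wd has_derivative_continuous by (meson continuous_at_imp_continuous_on)
  have [measurable]: "w \<in> borel_measurable borel" using wc by (rule borel_measurable_continuous_onI)
  have [measurable]: "D \<in> borel_measurable borel" using Dc by (rule borel_measurable_continuous_onI)
  have wint: "integrable lborel w"
  proof -
    have "integrable lborel (\<lambda>x. indicator K x *\<^sub>R w x)"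
      using borel_integrable_compact[OF K continuous_on_subset[OF wc]] by auto
    moreover have "(\<lambda>x. indicator K x *\<^sub>R w x) = w" using supp by (auto simp: fun_eq_iff indicator_def)
    ultimately show ?thesis by simp
  qed
  define K2 where "K2 = (\<lambda>p. fst p + snd p *\<^sub>R i) ` (K \<times> {-2..2::real})"
  have "compact K2" unfolding K2_def
    by (intro compact_continuous_image compact_Times K compact_Icc continuous_intros)
  hence "compact (D ` K2)" using Dc by (intro compact_continuous_image) (auto intro: continuous_on_subset)
  then obtain M where M: "\<And>x. x \<in> K2 \<Longrightarrow> \<bar>D x\<bar> \<le> M"
    using compact_imp_bounded[of "D ` K2"] unfolding bounded_iff by auto
  define K1 where "K1 = (\<lambda>p. fst p - snd p *\<^sub>R i) ` (K \<times> {0..1::real})"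
  have K1c: "compact K1" unfolding K1_def
    by (intro compact_continuous_image compact_Times K compact_Icc continuous_intros)
  define h :: "nat \<Rightarrow> real" where "h n = 1 / (Suc n)" for n
  have hpos: "0 < h n" "h n \<le> 1" for n by (auto simp: h_def)
  define s where "s n x = (w (x + h n *\<^sub>R i) - w x) / h n" for n x
  have bound: "\<bar>s n x\<bar> \<le> M * indicator K1 x" for n x
  proof (cases "x \<in> K1")
    case False
    have "x \<notin> K" using False unfolding K1_def by (force intro!: image_eqI[of _ _ "(x, 0)"])
    moreover have "x + h n *\<^sub>R i \<notin> K"
    proof
      assume "x + h n *\<^sub>R i \<in> K"
      hence "x \<in> K1" unfolding K1_def using hpos[of n]
        by (intro image_eqI[of _ _ "(x + h n *\<^sub>R i, h n)"]) auto
      thus False using False by simp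
    qed
    ultimately show ?thesis using False supp by (simp add: s_def)
  next
    case True
    then obtain k \<sigma> where k: "k \<in> K" "0 \<le> \<sigma>" "\<sigma> \<le> 1" "x = k - \<sigma> *\<^sub>R i" unfolding K1_def by auto
    obtain z where z: "0 < z" "z < h n"
      "w (x + h n *\<^sub>R i) - w (x + 0 *\<^sub>R i) = (h n - 0) * w' (x + z *\<^sub>R i) i"
      using MVT2[OF hpos(1)[of n], of "\<lambda>s. w (x + s *\<^sub>R i)" "\<lambda>t. w' (x + t *\<^sub>R i) i"]
        dir_deriv[OF wd] by blast
    have "x + z *\<^sub>R i \<in> K2" unfolding K2_def using k z hpos[of n]
      by (intro image_eqI[of _ _ "(k, z - \<sigma>)"]) (auto simp: algebra_simps)
    hence "\<bar>D (x + z *\<^sub>R i)\<bar> \<le> M" by (rule M)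
    moreover have "s n x = D (x + z *\<^sub>R i)" using z hpos[of n] by (simp add: s_def Dd)
    ultimately show ?thesis using True by simp
  qed
  have lim: "(\<lambda>n. s n x) \<longlonglongrightarrow> D x" for x
  proof -
    have d: "((\<lambda>t. w (x + t *\<^sub>R i)) has_real_derivative D x) (at 0)"
      using dir_deriv[OF wd, of x i 0] by (simp add: Dd)
    hence q: "((\<lambda>t. (w (x + t *\<^sub>R i) - w x) / t) \<longlongrightarrow> D x) (at 0)"
      unfolding has_field_derivative_iff by simp
    have hl: "filterlim h (at 0) sequentially"
    proof -
      have "h \<longlonglongrightarrow> 0" unfolding h_def
        using LIMSEQ_Suc[OF lim_inverse_n] by (simp add: divide_inverse)
      thus ?thesis using hpos by (auto simp: filterlim_at intro!: always_eventually) (metis hpos(1) less_irrefl)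
    qed
    show ?thesis using filterlim_compose[OF q hl] by (simp add: s_def)
  qed
  have sint: "integral\<^sup>L lborel (s n) = 0" for n
  proof -
    have i2: "integrable lborel (\<lambda>x. w (x + h n *\<^sub>R i))"
    proof -
      have "integrable (distr lborel borel ((+) (h n *\<^sub>R i))) w" using wint by (simp add: lborel_distr_plus)
      thus ?thesis by (subst (asm) integrable_distr_eq) (auto simp: add.commute)
    qed
    have "integral\<^sup>L lborel (s n) = (integral\<^sup>L lborel (\<lambda>x. w (x + h n *\<^sub>R i)) - integral\<^sup>L lborel w) / h n"
      unfolding s_def by (simp add: Bochner_Integration.integral_diff[OF i2 wint])
    also have "integral\<^sup>L lborel (\<lambda>x. w (x + h n *\<^sub>R i)) = integral\<^sup>L lborel w"
      using translate_integral[of w "h n *\<^sub>R i"] by (simp add: add.commute)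
    finally show ?thesis by simp
  qed
  have intM: "integrable lborel (\<lambda>x. M * indicator K1 x)"
    using K1c emeasure_compact_finite[OF K1c] by (auto intro!: integrable_mult_right borel_closed compact_imp_closed)
  have smeas[measurable]: "s n \<in> borel_measurable lborel" for n unfolding s_def by measurable
  have "integrable lborel D"
    by (rule integrable_dominated_convergence[where s=s and w="\<lambda>x. M * indicator K1 x"])
       (use intM lim bound in auto)
  moreover have "(\<lambda>n. integral\<^sup>L lborel (s n)) \<longlonglongrightarrow> integral\<^sup>L lborel D"
    by (rule integral_dominated_convergence[where s=s and w="\<lambda>x. M * indicator K1 x"])
       (use intM lim bound in auto)
  hence "integral\<^sup>L lborel D = 0" using sint by (simp add: LIMSEQ_const_iff)
  ultimately show ?thesis by simp
qed



definition fq :: "real \<Rightarrow> real" where "fq t = (max 0 t)^2"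

lemma fq_deriv: "(fq has_real_derivative 2 * max 0 t) (at t)"
proof -
  consider "t > 0" | "t < 0" | "t = 0" by linarith
  thus ?thesis
  proof cases
    case 1
    have "((\<lambda>x. x^2) has_real_derivative 2 * max 0 t) (at t)"
      using 1 by (auto intro!: derivative_eq_intros)
    from has_field_derivative_transform_within_open[OF this, of "{0<..}" fq]
    show ?thesis using 1 by (auto simp: fq_def)
  next
    case 2
    have "((\<lambda>x. 0) has_real_derivative 2 * max 0 t) (at t)" using 2 by (auto intro!: derivative_eq_intros)
    from has_field_derivative_transform_within_open[OF this, of "{..<0}" fq]
    show ?thesis using 2 by (auto simp: fq_def)
  next
    case 3
    have "((\<lambda>h. max 0 h) \<longlongrightarrow> max 0 0) (at (0::real))"
      by (intro tendsto_intros)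
    moreover have ev: "\<forall>\<^sub>F h in at (0::real). (fq (0 + h) - fq 0) / h = max 0 h"
      by (auto simp: eventually_at_filter fq_def power2_eq_square max_def)
    ultimately have "((\<lambda>h. (fq (0 + h) - fq 0) / h) \<longlongrightarrow> 0) (at (0::real))"
      using tendsto_cong[OF ev] by simp
    thus ?thesis using 3 by (simp add: has_field_derivative_iff)
  qed
qed

lemma fq_has_derivative[derivative_intros]:
  assumes "(g has_derivative g') (at x within S)"
  shows "((\<lambda>x. fq (g x)) has_derivative (\<lambda>h. 2 * max 0 (g x) * g' h)) (at x within S)"
proof -
  have "(fq has_derivative (\<lambda>h. 2 * max 0 (g x) * h)) (at (g x))"
    using fq_deriv[of "g x"] by (simp add: has_field_derivative_def)
  from has_derivative_compose[OF assms this] show ?thesis .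
qed

lemma fq_cont[continuous_intros]: "continuous_on S g \<Longrightarrow> continuous_on S (\<lambda>x. fq (g x))"
  unfolding fq_def by (intro continuous_intros)

definition bu :: "'a::euclidean_space \<Rightarrow> real \<Rightarrow> 'a \<Rightarrow> real" where
  "bu y \<rho> x = fq (\<rho>^2 - (x - y) \<bullet> (x - y))"

definition bg :: "'a::euclidean_space \<Rightarrow> real \<Rightarrow> 'a \<Rightarrow> 'a" where
  "bg y \<rho> x = (-4 * max 0 (\<rho>^2 - (x - y) \<bullet> (x - y))) *\<^sub>R (x - y)"

lemma bu_deriv: "(bu y \<rho> has_derivative (\<lambda>h. bg y \<rho> x \<bullet> h)) (at x)"
proof -
  have i: "((\<lambda>x::'a. (x - y) \<bullet> (x - y)) has_derivative (\<lambda>h. (x-y) \<bullet> h + h \<bullet> (x - y))) (at x)"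
    by (rule has_derivative_eq_rhs, rule derivative_eq_intros, rule derivative_eq_intros, auto intro!: derivative_eq_intros)
  have "((\<lambda>x. \<rho>^2 - (x - y) \<bullet> (x - y)) has_derivative (\<lambda>h. 0 - ((x-y) \<bullet> h + h \<bullet> (x - y)))) (at x)"
    by (intro has_derivative_diff has_derivative_const i)
  from fq_has_derivative[OF this]
  have "((\<lambda>x. fq (\<rho>^2 - (x - y) \<bullet> (x - y))) has_derivative
     (\<lambda>h. 2 * max 0 (\<rho>^2 - (x - y) \<bullet> (x - y)) * (0 - ((x - y) \<bullet> h + h \<bullet> (x - y))))) (at x)" .
  moreover have "(\<lambda>h. 2 * max 0 (\<rho>^2 - (x - y) \<bullet> (x - y)) * (0 - ((x - y) \<bullet> h + h \<bullet> (x - y))))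
     = (\<lambda>h. bg y \<rho> x \<bullet> h)"
    unfolding bg_def
  proof
    fix h
    have "(x - y) \<bullet> h + h \<bullet> (x - y) = 2*((x-y) \<bullet> h)" using inner_commute[of h "x - y"] by simp
    thus "2 * max 0 (\<rho>^2 - (x - y) \<bullet> (x - y)) * (0 - ((x - y) \<bullet> h + h \<bullet> (x - y))) =
      ((-4 * max 0 (\<rho>^2 - (x - y) \<bullet> (x - y))) *\<^sub>R (x - y)) \<bullet> h"
      by (simp only: inner_scaleR_left) simp
  qed
  ultimately show ?thesis by (simp add: bu_def[abs_def])
qed

lemma bu_cont: "continuous_on S (bu y \<rho>)"
  unfolding bu_def[abs_def] by (intro continuous_intros)

lemma bg_cont: "continuous_on S (bg y \<rho>)"
  unfolding bg_def[abs_def] by (intro continuous_intros)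

lemma bu_supp: "0 \<le> \<rho> \<Longrightarrow> x \<notin> cball y \<rho> \<Longrightarrow> bu y \<rho> x = 0"
proof -
  assume "x \<notin> cball y \<rho>" "0 \<le> \<rho>"
  hence "\<rho> \<le> norm (x - y)" by (simp add: dist_norm norm_minus_commute)
  hence "\<rho>^2 \<le> (norm (x - y))^2" using \<open>0 \<le> \<rho>\<close> by (intro power_mono) auto
  hence "\<rho>^2 \<le> (x - y) \<bullet> (x - y)" by (simp add: power2_norm_eq_inner)
  thus ?thesis by (simp add: bu_def fq_def)
qed

lemma bg_supp: "0 \<le> \<rho> \<Longrightarrow> x \<notin> cball y \<rho> \<Longrightarrow> bg y \<rho> x = 0"
proof -
  assume "x \<notin> cball y \<rho>" "0 \<le> \<rho>"
  hence "\<rho> \<le> norm (x - y)" by (simp add: dist_norm norm_minus_commute)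
  hence "\<rho>^2 \<le> (norm (x - y))^2" using \<open>0 \<le> \<rho>\<close> by (intro power_mono) auto
  hence "\<rho>^2 \<le> (x - y) \<bullet> (x - y)" by (simp add: power2_norm_eq_inner)
  thus ?thesis by (simp add: bg_def)
qed

lemma integrable_cont_supp:
  fixes f :: "'a::euclidean_space \<Rightarrow> 'b::{banach,second_countable_topology}"
  assumes "continuous_on UNIV f" "compact K" "\<And>x. x \<notin> K \<Longrightarrow> f x = 0"
  shows "integrable lborel f"
proof -
  have "integrable lborel (\<lambda>x. indicator K x *\<^sub>R f x)"
    using borel_integrable_compact[OF assms(2) continuous_on_subset[OF assms(1)]] by auto
  moreover have "(\<lambda>x. indicator K x *\<^sub>R f x) = f" using assms(3) by (auto simp: fun_eq_iff indicator_def)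
  ultimately show ?thesis by simp
qed

lemma loc_int_cont:
  fixes f :: "'a::euclidean_space \<Rightarrow> 'b::{banach,second_countable_topology}"
  assumes "continuous_on UNIV f"
  shows "loc_int_punct f"
  unfolding loc_int_punct_def set_integrable_def
proof safe
  fix K :: "'a set" assume K: "compact K"
  have [measurable]: "f \<in> borel_measurable borel" using assms by (rule borel_measurable_continuous_onI)
  have 1: "integrable lborel (\<lambda>x. indicator K x *\<^sub>R f x)"
    using borel_integrable_compact[OF K continuous_on_subset[OF assms]] by auto
  have [measurable]: "K \<in> sets borel" using K by (auto intro: borel_closed compact_imp_closed)
  have 2: "(\<lambda>x. indicator K x *\<^sub>R f x) \<in> borel_measurable lborel" by measurable
  from 1 2 show "integrable lebesgue (\<lambda>x. indicator K x *\<^sub>R f x)"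
    by (simp add: integrable_completion)
qed

lemma weak_grad_bump:
  fixes y :: "'a::euclidean_space"
  assumes \<rho>0: "0 \<le> \<rho>"
  shows "weak_grad_punct (bu y \<rho>) (bg y \<rho>)"
  unfolding weak_grad_punct_def
proof (intro conjI allI impI ballI)
  show "loc_int_punct (bu y \<rho>)" by (rule loc_int_cont[OF bu_cont])
  show "loc_int_punct (bg y \<rho>)" by (rule loc_int_cont[OF bg_cont])
  fix \<phi> :: "'a \<Rightarrow> real" and i :: 'a
  assume "test_fun_punct \<phi>" "i \<in> Basis"
  hence sm: "smooth_fun \<phi>" unfolding test_fun_punct_def by auto
  have d0: "\<phi> differentiable (at x)" for x using sm unfolding smooth_fun_def
    by (metis empty_set empty_subsetI iter_pd.simps(1))
  have d1: "pd i \<phi> differentiable (at x)" for x using sm \<open>i \<in> Basis\<close> unfolding smooth_fun_def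
    by (metis empty_set empty_subsetI iter_pd.simps iter_pd.simps(1) list.simps(15) insert_subset)
  define \<phi>' where "\<phi>' x = frechet_derivative \<phi> (at x)" for x
  have \<phi>d: "(\<phi> has_derivative \<phi>' x) (at x)" for x using d0 unfolding \<phi>'_def frechet_derivative_works .
  have pdc: "continuous_on UNIV (pd i \<phi>)"
    using d1 by (meson continuous_at_imp_continuous_on differentiable_imp_continuous_within)
  have \<phi>c: "continuous_on UNIV \<phi>"
    using d0 by (meson continuous_at_imp_continuous_on differentiable_imp_continuous_within)
  have pdeq: "pd i \<phi> x = \<phi>' x i" for x by (simp add: pd_def \<phi>'_def)
  define w where "w x = bu y \<rho> x * \<phi> x" for x
  define w' where "w' x = (\<lambda>h. bu y \<rho> x * \<phi>' x h + (bg y \<rho> x \<bullet> h) * \<phi> x)" for x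
  define f1 where "f1 x = bu y \<rho> x * pd i \<phi> x" for x
  define f2 where "f2 x = (bg y \<rho> x \<bullet> i) * \<phi> x" for x
  have wd: "(w has_derivative w' x) (at x)" for x
    unfolding w_def[abs_def] w'_def
    using has_derivative_mult[OF bu_deriv \<phi>d] by (simp add: algebra_simps)
  have f1c: "continuous_on UNIV f1" unfolding f1_def[abs_def]
    by (intro continuous_intros bu_cont pdc)
  have f2c: "continuous_on UNIV f2" unfolding f2_def[abs_def]
    by (intro continuous_intros bg_cont \<phi>c)
  have Deq: "f1 x + f2 x = w' x i" for x by (simp add: f1_def f2_def w'_def pdeq)
  have "integrable lborel (\<lambda>x. f1 x + f2 x) \<and> integral\<^sup>L lborel (\<lambda>x. f1 x + f2 x) = 0"
    by (rule ibp_zero[where D="\<lambda>x. f1 x + f2 x", OF wd Deq _ compact_cball[of y \<rho>]])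
       (auto intro!: continuous_intros f1c f2c simp: w_def bu_supp[OF \<rho>0])
  moreover have i1: "integrable lborel f1"
    by (rule integrable_cont_supp[OF f1c compact_cball[of y \<rho>]]) (simp add: f1_def bu_supp[OF \<rho>0])
  moreover have i2: "integrable lborel f2"
    by (rule integrable_cont_supp[OF f2c compact_cball[of y \<rho>]]) (simp add: f2_def bg_supp[OF \<rho>0])
  ultimately have "integral\<^sup>L lborel f1 = - integral\<^sup>L lborel f2"
    by (simp add: Bochner_Integration.integral_add)
  moreover have m1: "f1 \<in> borel_measurable lborel" and m2: "f2 \<in> borel_measurable lborel"
    using f1c f2c by (auto intro: borel_measurable_continuous_onI)
  ultimately have "integral\<^sup>L lebesgue f1 = - integral\<^sup>L lebesgue f2"
    by (simp only: integral_completion[OF m1] integral_completion[OF m2])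
  thus "(\<integral>x. bu y \<rho> x * pd i \<phi> x \<partial>lebesgue) = - (\<integral>x. (bg y \<rho> x \<bullet> i) * \<phi> x \<partial>lebesgue)"
    unfolding f1_def[abs_def] f2_def[abs_def] .
qed



lemma nn_affine:
  fixes f :: "'a::euclidean_space \<Rightarrow> ennreal"
  assumes [measurable]: "f \<in> borel_measurable borel" and c: "0 < c"
  shows "(\<integral>\<^sup>+x. f x \<partial>lborel) = ennreal (c ^ DIM('a)) * (\<integral>\<^sup>+z. f (y + c *\<^sub>R z) \<partial>lborel)"
  using c by (subst lborel_affine[of c y]) (simp_all add: nn_integral_density nn_integral_distr nn_integral_cmult)

lemma tpow_bounds:
  fixes t d :: real
  assumes "1/2 \<le> t" "t \<le> 3/2"
  shows "min ((1/2) powr d) ((3/2) powr d) \<le> t powr d \<and> t powr d \<le> max ((1/2) powr d) ((3/2) powr d)"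
proof (cases "0 \<le> d")
  case True
  have "(1/2) powr d \<le> t powr d" "t powr d \<le> (3/2) powr d"
    using assms True by (auto intro!: powr_mono2)
  thus ?thesis by auto
next
  case False
  have "(3/2) powr d \<le> t powr d" "t powr d \<le> (1/2) powr d"
    using assms False by (auto intro!: powr_mono2')
  thus ?thesis by auto
qed

lemma scale_bounds:
  fixes F :: "'a::euclidean_space \<Rightarrow> real" and d s :: real
  assumes Fc: "continuous_on UNIV F" and F0: "\<And>z. 0 \<le> F z" and Fs: "\<And>z. 1 \<le> norm z \<Longrightarrow> F z = 0"
   and Fp: "F z0 > 0" and s: "0 < s"
  shows "\<exists>k K. 0 < k \<and> (\<forall>y \<rho> A. y \<noteq> 0 \<longrightarrow> 0 < \<rho> \<longrightarrow> \<rho> \<le> norm y / 2 \<longrightarrow> 0 < A \<longrightarrow>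
     (\<exists>W. (\<integral>\<^sup>+x. ennreal (norm x powr d * (A * F ((x - y) /\<^sub>R \<rho>)) powr s) \<partial>lebesgue) = ennreal W
       \<and> k * (\<rho> ^ DIM('a) * norm y powr d * A powr s) \<le> W \<and> W \<le> K * (\<rho> ^ DIM('a) * norm y powr d * A powr s)))"
proof -
  have [measurable]: "F \<in> borel_measurable borel" using Fc by (rule borel_measurable_continuous_onI)
  define G where "G z = F z powr s" for z
  have G0: "G z \<ge> 0" for z by (simp add: G_def)
  have [measurable]: "G \<in> borel_measurable borel" unfolding G_def[abs_def] by measurable
  define I where "I = (\<integral>\<^sup>+z. ennreal (G z) \<partial>lborel)"
  have Gc: "continuous_on UNIV G" unfolding G_def[abs_def]
    using s F0 by (intro continuous_on_powr' Fc continuous_on_const) auto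
  have "compact (G ` cball 0 1)" by (intro compact_continuous_image continuous_on_subset[OF Gc]) auto
  then obtain Mg where Mg: "\<forall>z\<in>cball 0 1. \<bar>G z\<bar> \<le> Mg"
    using compact_imp_bounded[of "G ` cball 0 1"] unfolding bounded_iff by auto
  have Gle: "ennreal (G z) \<le> ennreal Mg * indicator (cball 0 1) z" for z
  proof (cases "z \<in> cball 0 1")
    case True
    hence "\<bar>G z\<bar> \<le> Mg" using Mg by blast
    thus ?thesis using True by (auto intro!: ennreal_leI)
  next
    case False thus ?thesis using Fs[of z] s by (simp add: G_def)
  qed
  have "I \<le> (\<integral>\<^sup>+z. ennreal Mg * indicator (cball (0::'a) 1) z \<partial>lborel)"
    unfolding I_def by (rule nn_integral_mono) (rule Gle)
  also have "\<dots> = ennreal Mg * emeasure lborel (cball (0::'a) 1)"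
    by (simp add: nn_integral_cmult_indicator)
  also have "\<dots> < \<infinity>" using emeasure_lborel_cball_finite[of "0::'a" 1] by (simp add: ennreal_mult_less_top)
  finally have Ifin: "I < \<infinity>" .
  obtain \<eta> where \<eta>: "\<eta> > 0" "\<And>z. dist z z0 < \<eta> \<Longrightarrow> dist (F z) (F z0) < F z0 / 2"
    using Fc Fp unfolding continuous_on_iff by (metis UNIV_I half_gt_zero)
  have Fball: "F z0 / 2 \<le> F z" if "z \<in> ball z0 \<eta>" for z
    using \<eta>(2)[of z] that abs_ge_self[of "F z0 - F z"] by (auto simp: dist_commute dist_real_def)
  have "ennreal ((F z0 / 2) powr s) * indicator (ball z0 \<eta>) z \<le> ennreal (G z)" for z
  proof (cases "z \<in> ball z0 \<eta>")
    case True thus ?thesis using Fball[OF True] Fp s by (auto simp: G_def intro!: ennreal_leI powr_mono2)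
  qed simp
  hence "(\<integral>\<^sup>+z. ennreal ((F z0 / 2) powr s) * indicator (ball z0 \<eta>) z \<partial>lborel) \<le> I"
    unfolding I_def by (intro nn_integral_mono) auto
  moreover have "(\<integral>\<^sup>+z. ennreal ((F z0 / 2) powr s) * indicator (ball z0 \<eta>) z \<partial>lborel)
     = ennreal ((F z0 / 2) powr s) * emeasure lborel (ball z0 \<eta>)"
    by (simp add: nn_integral_cmult_indicator)
  moreover have "emeasure lborel (ball z0 \<eta>) > 0" using \<eta> by (simp add: emeasure_ball)
  moreover have "ennreal ((F z0 / 2) powr s) > 0" using Fp by simp
  ultimately have Ipos: "I > 0" by (metis ennreal_zero_less_mult_iff order_less_le_trans)
  define I0 where "I0 = enn2real I"
  have I0: "I = ennreal I0" "I0 > 0" using Ifin Ipos by (auto simp: I0_def enn2real_positive_iff less_top)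
  define m where "m = min ((1/2) powr d) ((3/2::real) powr d)"
  define M where "M = max ((1/2) powr d) ((3/2::real) powr d)"
  have m0: "m > 0" by (simp add: m_def)
  have M0: "M > 0" by (simp add: M_def max_def)
  show ?thesis
  proof (rule exI[of _ "m * I0"], rule exI[of _ "M * I0"], intro conjI allI impI)
    show "0 < m * I0" using m0 I0 by simp
    fix y :: 'a and \<rho> A :: real
    assume y: "y \<noteq> 0" and \<rho>: "0 < \<rho>" "\<rho> \<le> norm y / 2" and A: "0 < A"
    define R where "R = norm y"
    have R: "R > 0" using y by (simp add: R_def)
    define Q where "Q = R powr d * A powr s"
    have Q: "Q > 0" using R A by (simp add: Q_def)
    define H where "H x = ennreal (norm x powr d * (A * F ((x - y) /\<^sub>R \<rho>)) powr s)" for x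
    have [measurable]: "H \<in> borel_measurable borel" unfolding H_def[abs_def] by measurable
    have Hz: "H (y + \<rho> *\<^sub>R z) = ennreal (norm (y + \<rho> *\<^sub>R z) powr d * (A * F z) powr s)" for z
      using \<rho> by (simp add: H_def)
    have pw: "ennreal (m * Q * G z) \<le> H (y + \<rho> *\<^sub>R z) \<and> H (y + \<rho> *\<^sub>R z) \<le> ennreal (M * Q * G z)" for z
    proof (cases "F z = 0")
      case True thus ?thesis using s by (simp add: Hz G_def)
    next
      case False
      hence nz: "norm z < 1" using Fs by force
      define t where "t = norm (y + \<rho> *\<^sub>R z) / R"
      have "norm (\<rho> *\<^sub>R z) \<le> \<rho>" using nz \<rho> by (simp add: mult_left_le)
      hence "R - \<rho> \<le> norm (y + \<rho> *\<^sub>R z)" "norm (y + \<rho> *\<^sub>R z) \<le> R + \<rho>"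
        unfolding R_def using norm_triangle_ineq[of y "\<rho> *\<^sub>R z"] norm_triangle_ineq2[of y "- (\<rho> *\<^sub>R z)"]
        by auto
      hence t: "1/2 \<le> t" "t \<le> 3/2" using \<rho> R unfolding t_def R_def by (auto simp: field_simps)
      have nt: "norm (y + \<rho> *\<^sub>R z) = t * R" using R by (simp add: t_def)
      have eq: "norm (y + \<rho> *\<^sub>R z) powr d * (A * F z) powr s = t powr d * (Q * G z)"
        using t R A F0[of z] by (simp add: nt powr_mult Q_def G_def)
      have tb: "m \<le> t powr d" "t powr d \<le> M" using tpow_bounds[OF t, of d] by (auto simp: m_def M_def)
      have QG: "Q * G z \<ge> 0" using Q G0[of z] by simp
      show ?thesis unfolding Hz eq using tb QG
        by (auto intro!: ennreal_leI mult_right_mono simp: mult.assoc)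
    qed
    define J where "J = (\<integral>\<^sup>+z. H (y + \<rho> *\<^sub>R z) \<partial>lborel)"
    have intc: "(\<integral>\<^sup>+z. ennreal (c * G z) \<partial>lborel) = ennreal c * I" if "c \<ge> 0" for c
      unfolding I_def using that G0 by (subst nn_integral_cmult[symmetric]) (auto simp: ennreal_mult)
    have Jl: "ennreal (m * Q) * I \<le> J" unfolding J_def intc[of "m*Q", symmetric, OF mult_nonneg_nonneg[OF less_imp_le[OF m0] less_imp_le[OF Q]]]
      using pw by (intro nn_integral_mono) (auto simp: mult.assoc)
    have Ju: "J \<le> ennreal (M * Q) * I" unfolding J_def intc[of "M*Q", symmetric, OF mult_nonneg_nonneg[OF less_imp_le[OF M0] less_imp_le[OF Q]]]
      using pw by (intro nn_integral_mono) (auto simp: mult.assoc)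
    have "ennreal (M * Q) * I < \<infinity>" using I0(1) by (simp add: ennreal_mult_less_top)
    hence Jfin: "J < \<infinity>" using Ju by (rule le_less_trans[rotated])
    define J0 where "J0 = enn2real J"
    have J0: "J = ennreal J0" "J0 \<ge> 0" using Jfin by (auto simp: J0_def less_top)
    have J0b: "m * Q * I0 \<le> J0" "J0 \<le> M * Q * I0"
      using Jl Ju J0 I0 m0 M0 Q by (auto simp: ennreal_mult[symmetric] ennreal_le_iff)
    have "(\<integral>\<^sup>+x. H x \<partial>lebesgue) = ennreal (\<rho> ^ DIM('a)) * J"
      unfolding nn_integral_completion J_def by (rule nn_affine) (use \<rho> in auto)
    also have "\<dots> = ennreal (\<rho> ^ DIM('a) * J0)" using J0 \<rho> by (simp add: ennreal_mult)
    finally have eqW: "(\<integral>\<^sup>+x. H x \<partial>lebesgue) = ennreal (\<rho> ^ DIM('a) * J0)" .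
    have pN: "\<rho> ^ DIM('a) > 0" using \<rho> by simp
    show "\<exists>W. (\<integral>\<^sup>+x. ennreal (norm x powr d * (A * F ((x - y) /\<^sub>R \<rho>)) powr s) \<partial>lebesgue) = ennreal W
       \<and> m * I0 * (\<rho> ^ DIM('a) * norm y powr d * A powr s) \<le> W \<and> W \<le> M * I0 * (\<rho> ^ DIM('a) * norm y powr d * A powr s)"
    proof (intro exI conjI)
      show "(\<integral>\<^sup>+x. ennreal (norm x powr d * (A * F ((x - y) /\<^sub>R \<rho>)) powr s) \<partial>lebesgue) = ennreal (\<rho> ^ DIM('a) * J0)"
        using eqW by (simp add: H_def)
      show "m * I0 * (\<rho> ^ DIM('a) * norm y powr d * A powr s) \<le> \<rho> ^ DIM('a) * J0"
        using mult_left_mono[OF J0b(1) less_imp_le[OF pN]] by (simp add: Q_def R_def ac_simps)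
      show "\<rho> ^ DIM('a) * J0 \<le> M * I0 * (\<rho> ^ DIM('a) * norm y powr d * A powr s)"
        using mult_left_mono[OF J0b(2) less_imp_le[OF pN]] by (simp add: Q_def R_def ac_simps)
    qed
  qed
qed



definition F1 :: "'a::euclidean_space \<Rightarrow> real" where "F1 z = fq (1 - z \<bullet> z)"
definition F2 :: "'a::euclidean_space \<Rightarrow> real" where "F2 z = 4 * max 0 (1 - z \<bullet> z) * norm z"

lemma fq_nonneg: "fq t \<ge> 0" by (simp add: fq_def)

lemma fq_scale: assumes "c > 0" shows "fq (c * w) = c^2 * fq w"
proof -
  have "max 0 (c*w) = c * max 0 w" using assms by (cases "w \<ge> 0") (auto simp: max_def mult_le_0_iff zero_le_mult_iff)
  thus ?thesis by (simp add: fq_def power_mult_distrib)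
qed

lemma bu_eq: assumes "0 < \<rho>" shows "bu y \<rho> x = \<rho>^4 * F1 ((x - y) /\<^sub>R \<rho>)"
proof -
  have "x - y = \<rho> *\<^sub>R ((x - y) /\<^sub>R \<rho>)" using assms by simp
  hence "(x - y) \<bullet> (x - y) = \<rho>^2 * (((x - y) /\<^sub>R \<rho>) \<bullet> ((x - y) /\<^sub>R \<rho>))"
    by (metis inner_scaleR_left inner_scaleR_right mult.assoc power2_eq_square)
  hence "\<rho>^2 - (x - y) \<bullet> (x - y) = \<rho>^2 * (1 - ((x - y) /\<^sub>R \<rho>) \<bullet> ((x - y) /\<^sub>R \<rho>))"
    by (simp add: algebra_simps)
  thus ?thesis using assms by (simp add: bu_def F1_def fq_scale power2_eq_square power4_eq_xxxx)
qed

lemma norm_bg_eq: assumes "0 < \<rho>" shows "norm (bg y \<rho> x) = \<rho>^3 * F2 ((x - y) /\<^sub>R \<rho>)"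
proof -
  define z where "z = (x - y) /\<^sub>R \<rho>"
  have xy: "x - y = \<rho> *\<^sub>R z" using assms by (simp add: z_def)
  have "(x - y) \<bullet> (x - y) = \<rho>^2 * (z \<bullet> z)" unfolding xy by (simp add: power2_eq_square)
  hence e: "\<rho>^2 - (x - y) \<bullet> (x - y) = \<rho>^2 * (1 - z \<bullet> z)" by (simp add: algebra_simps)
  have 1: "norm (bg y \<rho> x) = 4 * max 0 (\<rho>^2 - (x - y) \<bullet> (x - y)) * norm (x - y)"
    by (simp add: bg_def abs_mult)
  have 2: "max 0 (\<rho>^2 - (x - y) \<bullet> (x - y)) = \<rho>^2 * max 0 (1 - z \<bullet> z)"
    unfolding e using assms by (auto simp: max_def mult_le_0_iff zero_le_mult_iff)
  have 3: "norm (x - y) = \<rho> * norm z" using assms by (simp add: xy)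
  have "norm (bg y \<rho> x) = 4 * (\<rho>^2 * max 0 (1 - z \<bullet> z)) * (\<rho> * norm z)"
    unfolding 1 2 3 ..
  also have "\<dots> = \<rho>^3 * F2 z" by (simp add: F2_def power3_eq_cube power2_eq_square)
  finally show ?thesis by (simp add: z_def)
qed

lemma F1_props:
  "continuous_on UNIV (F1::'a::euclidean_space \<Rightarrow> real)" "\<And>z. 0 \<le> F1 z" "\<And>z::'a. 1 \<le> norm z \<Longrightarrow> F1 z = 0" "F1 (0::'a) > 0"
proof -
  show "continuous_on UNIV (F1::'a::euclidean_space \<Rightarrow> real)" unfolding F1_def[abs_def] by (intro continuous_intros)
  show "\<And>z. 0 \<le> F1 z" by (simp add: F1_def fq_nonneg)
  show "F1 (0::'a) > 0" by (simp add: F1_def fq_def)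
  fix z :: 'a assume "1 \<le> norm z"
  hence "1 \<le> (norm z)^2" by (simp add: one_le_power)
  thus "F1 z = 0" by (simp add: F1_def fq_def power2_norm_eq_inner)
qed

lemma F2_props:
  "continuous_on UNIV (F2::'a::euclidean_space \<Rightarrow> real)" "\<And>z. 0 \<le> F2 z" "\<And>z::'a. 1 \<le> norm z \<Longrightarrow> F2 z = 0"
  "\<exists>z0::'a. F2 z0 > 0"
proof -
  show "continuous_on UNIV (F2::'a::euclidean_space \<Rightarrow> real)" unfolding F2_def[abs_def] by (intro continuous_intros)
  show "\<And>z. 0 \<le> F2 z" by (simp add: F2_def)
  obtain e :: 'a where e: "e \<in> Basis" using nonempty_Basis by blast
  have "F2 ((1/2) *\<^sub>R e) = 3/2" using e by (simp add: F2_def)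
  thus "\<exists>z0::'a. F2 z0 > 0" by (intro exI[of _ "(1/2) *\<^sub>R e"]) simp
  fix z :: 'a assume "1 \<le> norm z"
  hence "1 \<le> (norm z)^2" by (simp add: one_le_power)
  thus "F2 z = 0" by (simp add: F2_def power2_norm_eq_inner)
qed



lemma pow_split:
  fixes k \<rho> R s d :: real
  assumes "k > 0" "\<rho> > 0" "R > 0" "s > 0"
  shows "(k * (\<rho> ^ n * R powr d * (\<rho> ^ m) powr s)) powr (1/s) = k powr (1/s) * \<rho> powr (real n / s + real m) * R powr (d/s)"
proof -
  have "(k * (\<rho> ^ n * R powr d * (\<rho> ^ m) powr s)) powr (1/s) = k powr (1/s) * (\<rho> powr real n) powr (1/s) * (R powr d) powr (1/s) * ((\<rho> powr real m) powr s) powr (1/s)"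
    using assms by (simp add: powr_mult powr_realpow)
  also have "\<dots> = k powr (1/s) * \<rho> powr (real n / s) * R powr (d/s) * \<rho> powr real m"
    using assms by (simp add: powr_powr)
  also have "\<dots> = k powr (1/s) * \<rho> powr (real n / s + real m) * R powr (d/s)"
    by (simp add: powr_add)
  finally show ?thesis .
qed

lemma split_tR:
  fixes t R e f g h :: real
  assumes "t > 0" "R > 0" "e + 4 = e'" "f + 4 = e' + g"
  shows "(t * R) powr e' * R powr g = (t powr 4 * R powr 4) * (t powr e * R powr f)"
proof -
  have "(t * R) powr e' * R powr g = t powr e' * R powr (e' + g)"
    using assms by (simp add: powr_mult powr_add)
  also have "\<dots> = t powr (e + 4) * R powr (f + 4)" using assms by simp
  also have "\<dots> = (t powr 4 * R powr 4) * (t powr e * R powr f)" by (simp add: powr_add)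
  finally show ?thesis .
qed

lemma cont_meas_leb: "continuous_on UNIV f \<Longrightarrow> (f::'a::euclidean_space \<Rightarrow> 'b::euclidean_space) \<in> borel_measurable lebesgue"
  by (rule measurable_completion) (simp add: borel_measurable_continuous_onI)

lemma key_ineq:
  fixes a b c p q r :: real
  assumes p: "1 \<le> p" and q: "0 < q" and r: "0 < r" and W: "W_embeds TYPE('a::euclidean_space) a b q p c r"
  shows "\<exists>K. \<forall>R t. 0 < R \<longrightarrow> 0 < t \<longrightarrow> t \<le> 1/2 \<longrightarrow>
    t powr (real DIM('a)/r) * R powr ((c + real DIM('a))/r) \<le> K * (t powr (real DIM('a)/q) * R powr ((a + real DIM('a))/q)
      + t powr (real DIM('a)/p - 1) * R powr ((b - p + real DIM('a))/p))"
proof -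
  define N where "N = real DIM('a)"
  obtain C where C: "\<And>(u::'a \<Rightarrow> real) g. weak_grad_punct u g \<Longrightarrow> in_wL a q u \<Longrightarrow> in_wL b p g
      \<Longrightarrow> in_wL c r u \<and> wnorm c r u \<le> C * (wnorm a q u + wnorm b p g)"
    using W unfolding W_embeds_def by blast
  have p0: "0 < p" using p by simp
  have F1p: "F1 (0::'a) > 0" by (rule F1_props(4))
  obtain k1 K1 where k1: "0 < k1" and B1: "\<forall>(y::'a) \<rho> A. y \<noteq> 0 \<longrightarrow> 0 < \<rho> \<longrightarrow> \<rho> \<le> norm y / 2 \<longrightarrow> 0 < A \<longrightarrow>
     (\<exists>W. (\<integral>\<^sup>+x. ennreal (norm x powr c * (A * F1 ((x - y) /\<^sub>R \<rho>)) powr r) \<partial>lebesgue) = ennreal W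
       \<and> k1 * (\<rho> ^ DIM('a) * norm y powr c * A powr r) \<le> W \<and> W \<le> K1 * (\<rho> ^ DIM('a) * norm y powr c * A powr r))"
    using scale_bounds[OF F1_props(1,2,3) F1p r, where d=c] by blast
  obtain k2 K2 where k2: "0 < k2" and B2: "\<forall>(y::'a) \<rho> A. y \<noteq> 0 \<longrightarrow> 0 < \<rho> \<longrightarrow> \<rho> \<le> norm y / 2 \<longrightarrow> 0 < A \<longrightarrow>
     (\<exists>W. (\<integral>\<^sup>+x. ennreal (norm x powr a * (A * F1 ((x - y) /\<^sub>R \<rho>)) powr q) \<partial>lebesgue) = ennreal W
       \<and> k2 * (\<rho> ^ DIM('a) * norm y powr a * A powr q) \<le> W \<and> W \<le> K2 * (\<rho> ^ DIM('a) * norm y powr a * A powr q))"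
    using scale_bounds[OF F1_props(1,2,3) F1p q, where d=a] by blast
  obtain z0 :: 'a where z0: "F2 z0 > 0" using F2_props(4) by blast
  obtain k3 K3 where k3: "0 < k3" and B3: "\<forall>(y::'a) \<rho> A. y \<noteq> 0 \<longrightarrow> 0 < \<rho> \<longrightarrow> \<rho> \<le> norm y / 2 \<longrightarrow> 0 < A \<longrightarrow>
     (\<exists>W. (\<integral>\<^sup>+x. ennreal (norm x powr b * (A * F2 ((x - y) /\<^sub>R \<rho>)) powr p) \<partial>lebesgue) = ennreal W
       \<and> k3 * (\<rho> ^ DIM('a) * norm y powr b * A powr p) \<le> W \<and> W \<le> K3 * (\<rho> ^ DIM('a) * norm y powr b * A powr p))"
    using scale_bounds[OF F2_props(1,2,3) z0 p0, where d=b] by blast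
  obtain e :: 'a where e: "e \<in> Basis" using nonempty_Basis by blast
  define Km where "Km = max (K2 powr (1/q)) (K3 powr (1/p))"
  define K where "K = C * Km / k1 powr (1/r)"
  show ?thesis
  proof (intro exI[of _ K] allI impI)
    fix R t :: real assume R: "0 < R" and t: "0 < t" "t \<le> 1/2"
    define y where "y = R *\<^sub>R e"
    define \<rho> where "\<rho> = t * R"
    have ny: "norm y = R" using R e by (simp add: y_def)
    have y0: "y \<noteq> 0" using R e by (auto simp: y_def)
    have \<rho>0: "0 < \<rho>" using R t by (simp add: \<rho>_def)
    have \<rho>y: "\<rho> \<le> norm y / 2" using R t by (simp add: \<rho>_def ny)
    define u where "u = bu y \<rho>"
    define g where "g = bg y \<rho>"
    have nu: "norm (u x) = \<rho>^4 * F1 ((x - y) /\<^sub>R \<rho>)" for x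
      using \<rho>0 F1_props(2)[of "(x - y) /\<^sub>R \<rho>"] by (simp add: u_def bu_eq)
    have ng: "norm (g x) = \<rho>^3 * F2 ((x - y) /\<^sub>R \<rho>)" for x
      using \<rho>0 by (simp add: g_def norm_bg_eq)
    obtain W1 where W1: "wint c r u = ennreal W1" "k1 * (\<rho> ^ DIM('a) * R powr c * (\<rho>^4) powr r) \<le> W1"
      using B1[rule_format, OF y0 \<rho>0 \<rho>y, of "\<rho>^4"] \<rho>0 unfolding wint_def nu ny by auto
    obtain W2 where W2: "wint a q u = ennreal W2" "k2 * (\<rho> ^ DIM('a) * R powr a * (\<rho>^4) powr q) \<le> W2"
       "W2 \<le> K2 * (\<rho> ^ DIM('a) * R powr a * (\<rho>^4) powr q)"
      using B2[rule_format, OF y0 \<rho>0 \<rho>y, of "\<rho>^4"] \<rho>0 unfolding wint_def nu ny by auto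
    obtain W3 where W3: "wint b p g = ennreal W3" "k3 * (\<rho> ^ DIM('a) * R powr b * (\<rho>^3) powr p) \<le> W3"
       "W3 \<le> K3 * (\<rho> ^ DIM('a) * R powr b * (\<rho>^3) powr p)"
      using B3[rule_format, OF y0 \<rho>0 \<rho>y, of "\<rho>^3"] \<rho>0 unfolding wint_def ng ny by auto
    have X1: "\<rho> ^ DIM('a) * R powr c * (\<rho>^4) powr r > 0" using \<rho>0 R by simp
    have X2: "\<rho> ^ DIM('a) * R powr a * (\<rho>^4) powr q > 0" using \<rho>0 R by simp
    have X3: "\<rho> ^ DIM('a) * R powr b * (\<rho>^3) powr p > 0" using \<rho>0 R by simp
    have W1p: "W1 > 0" using W1(2) k1 X1 by (smt (verit) mult_pos_pos)
    have W2p: "W2 > 0" using W2(2) k2 X2 by (smt (verit) mult_pos_pos)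
    have W3p: "W3 > 0" using W3(2) k3 X3 by (smt (verit) mult_pos_pos)
    have K2p: "K2 > 0" using W2 k2 X2 by (smt (verit) mult_le_cancel_right)
    have K3p: "K3 > 0" using W3 k3 X3 by (smt (verit) mult_le_cancel_right)
    have uc: "continuous_on UNIV u" unfolding u_def by (rule bu_cont)
    have gc: "continuous_on UNIV g" unfolding g_def by (rule bg_cont)
    have inu: "in_wL a q u" unfolding in_wL_def using W2(1) cont_meas_leb[OF uc] by simp
    have ing: "in_wL b p g" unfolding in_wL_def using W3(1) cont_meas_leb[OF gc] by simp
    have wg: "weak_grad_punct u g" unfolding u_def g_def by (rule weak_grad_bump) (use \<rho>0 in simp)
    have main: "W1 powr (1/r) \<le> C * (W2 powr (1/q) + W3 powr (1/p))"
      using C[OF wg inu ing] W1p W2p W3p by (simp add: wnorm_def W1(1) W2(1) W3(1))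
    have C0: "C \<ge> 0"
    proof (rule ccontr)
      assume "\<not> C \<ge> 0"
      hence "C * (W2 powr (1/q) + W3 powr (1/p)) < 0" using W2p W3p by (intro mult_neg_pos) (auto intro!: add_pos_pos)
      moreover have "W1 powr (1/r) > 0" using W1p by simp
      ultimately show False using main by simp
    qed
    have l1: "(k1 * (\<rho> ^ DIM('a) * R powr c * (\<rho>^4) powr r)) powr (1/r) \<le> W1 powr (1/r)"
      using W1(2) k1 X1 r by (intro powr_mono2) auto
    have l2: "W2 powr (1/q) \<le> (K2 * (\<rho> ^ DIM('a) * R powr a * (\<rho>^4) powr q)) powr (1/q)"
      using W2 W2p q by (intro powr_mono2) auto
    have l3: "W3 powr (1/p) \<le> (K3 * (\<rho> ^ DIM('a) * R powr b * (\<rho>^3) powr p)) powr (1/p)"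
      using W3 W3p p0 by (intro powr_mono2) auto
    have "(k1 * (\<rho> ^ DIM('a) * R powr c * (\<rho>^4) powr r)) powr (1/r)
       \<le> C * ((K2 * (\<rho> ^ DIM('a) * R powr a * (\<rho>^4) powr q)) powr (1/q) + (K3 * (\<rho> ^ DIM('a) * R powr b * (\<rho>^3) powr p)) powr (1/p))"
      using l1 main mult_left_mono[OF add_mono[OF l2 l3] C0] by linarith
    hence "k1 powr (1/r) * \<rho> powr (N / r + 4) * R powr (c/r)
       \<le> C * (K2 powr (1/q) * \<rho> powr (N / q + 4) * R powr (a/q) + K3 powr (1/p) * \<rho> powr (N / p + 3) * R powr (b/p))"
      using k1 K2p K3p \<rho>0 R r q p0 by (simp add: pow_split N_def)
    moreover have "\<rho> powr (N / r + 4) * R powr (c/r) = (t powr 4 * R powr 4) * (t powr (N/r) * R powr ((c + N)/r))"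
      unfolding \<rho>_def using t R r by (intro split_tR) (auto simp: field_simps)
    moreover have "\<rho> powr (N / q + 4) * R powr (a/q) = (t powr 4 * R powr 4) * (t powr (N/q) * R powr ((a + N)/q))"
      unfolding \<rho>_def using t R q by (intro split_tR) (auto simp: field_simps)
    moreover have "\<rho> powr (N / p + 3) * R powr (b/p) = (t powr 4 * R powr 4) * (t powr (N/p - 1) * R powr ((b - p + N)/p))"
      unfolding \<rho>_def using t R p0 by (intro split_tR) (auto simp: field_simps)
    ultimately have "k1 powr (1/r) * ((t powr 4 * R powr 4) * (t powr (N/r) * R powr ((c + N)/r)))
       \<le> C * (K2 powr (1/q) * ((t powr 4 * R powr 4) * (t powr (N/q) * R powr ((a + N)/q)))
           + K3 powr (1/p) * ((t powr 4 * R powr 4) * (t powr (N/p - 1) * R powr ((b - p + N)/p))))"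
      by (simp add: mult.assoc)
    hence "(t powr 4 * R powr 4) * (k1 powr (1/r) * (t powr (N/r) * R powr ((c + N)/r)))
       \<le> (t powr 4 * R powr 4) * (C * (K2 powr (1/q) * (t powr (N/q) * R powr ((a + N)/q))
           + K3 powr (1/p) * (t powr (N/p - 1) * R powr ((b - p + N)/p))))"
      by (simp add: algebra_simps)
    hence "k1 powr (1/r) * (t powr (N/r) * R powr ((c + N)/r))
       \<le> C * (K2 powr (1/q) * (t powr (N/q) * R powr ((a + N)/q))
           + K3 powr (1/p) * (t powr (N/p - 1) * R powr ((b - p + N)/p)))"
      using t R by (simp add: mult_le_cancel_left_pos)
    also have "\<dots> \<le> C * (Km * (t powr (N/q) * R powr ((a + N)/q))
           + Km * (t powr (N/p - 1) * R powr ((b - p + N)/p)))"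
      using C0 t R by (intro mult_left_mono add_mono mult_right_mono) (auto simp: Km_def)
    finally have "k1 powr (1/r) * (t powr (N/r) * R powr ((c + N)/r))
       \<le> C * Km * (t powr (N/q) * R powr ((a + N)/q) + t powr (N/p - 1) * R powr ((b - p + N)/p))"
      by (simp add: algebra_simps)
    hence "t powr (N/r) * R powr ((c + N)/r)
       \<le> C * Km * (t powr (N/q) * R powr ((a + N)/q) + t powr (N/p - 1) * R powr ((b - p + N)/p)) / k1 powr (1/r)"
      using k1 by (simp add: field_simps)
    thus "t powr (real DIM('a)/r) * R powr ((c + real DIM('a))/r) \<le> K * (t powr (real DIM('a)/q) * R powr ((a + real DIM('a))/q)
      + t powr (real DIM('a)/p - 1) * R powr ((b - p + real DIM('a))/p))"
      by (simp add: K_def N_def)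
  qed
qed



lemma conv_min:
  fixes \<theta> a b :: real
  assumes "0 \<le> \<theta>" "\<theta> \<le> 1"
  shows "min a b \<le> (1 - \<theta>) * a + \<theta> * b"
proof -
  have "(1 - \<theta>) * min a b \<le> (1 - \<theta>) * a" using assms by (intro mult_left_mono) auto
  moreover have "\<theta> * min a b \<le> \<theta> * b" using assms by (intro mult_left_mono) auto
  ultimately show ?thesis by (simp add: algebra_simps)
qed

lemma final_r:
  fixes q r P :: real
  assumes "0 < q" "0 < r" "0 < P" "min (1/q) (1/P) \<le> 1/r"
  shows "ereal r \<le> max (ereal P) (ereal q)"
proof -
  have "r \<le> q \<or> r \<le> P"
  proof (cases "1/q \<le> 1/P")
    case True
    hence "1/q \<le> 1/r" using assms by simp
    thus ?thesis using assms by (simp add: field_simps)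
  next
    case False
    hence "1/P \<le> 1/r" using assms by simp
    thus ?thesis using assms by (simp add: field_simps)
  qed
  thus ?thesis by (auto simp: le_max_iff_disj)
qed

lemma sob_inv:
  fixes p :: real and N :: nat
  assumes "0 < p" "p < real N"
  shows "sob_exp p N = ereal (real N * p / (real N - p))" "real N * p / (real N - p) > 0"
    "1 / (real N * p / (real N - p)) = 1/p - 1/real N"
  using assms by (auto simp: sob_exp_def field_simps)

theorem theorem2p3:
  fixes a b c p q r :: real
  defines "N \<equiv> DIM('a::euclidean_space)"
  assumes "1 \<le> p" and "0 < q" and "0 < r"
  shows "((a + real N) / q \<noteq> (b - p + real N) / p \<and> W_embeds TYPE('a) a b q p c r
            \<longrightarrow> theta N a b q p r c \<in> {0..1}
              \<and> theta N a b q p r c * (1/p - 1/real N - 1/q) \<le> 1/r - 1/q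
              \<and> ereal r \<le> max (sob_exp p N) (ereal q))
       \<and> ((a + real N) / q = (b - p + real N) / p \<and> c = c0 N a q r \<and> W_embeds TYPE('a) a b q p c r
            \<longrightarrow> ereal r \<le> max (sob_exp p N) (ereal q))"
proof (intro conjI impI; elim conjE)
  have p: "1 \<le> p" and q: "0 < q" and r: "0 < r" using assms by auto
  have p0: "0 < p" using p by simp
  have Npos: "real N > 0" by (simp add: N_def)
  {
    assume ne: "(a + real N) / q \<noteq> (b - p + real N) / p" and W: "W_embeds TYPE('a) a b q p c r"
    obtain K where H: "\<And>R t. 0 < R \<Longrightarrow> 0 < t \<Longrightarrow> t \<le> 1/2 \<Longrightarrow>
      t powr (real N/r) * R powr ((c + real N)/r) \<le> K * (t powr (real N/q) * R powr ((a + real N)/q)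
      + t powr (real N/p - 1) * R powr ((b - p + real N)/p))"
      using key_ineq[OF p q r W] unfolding N_def by blast
    define \<alpha> where "\<alpha> = (c + real N)/r"
    define \<beta> where "\<beta> = (a + real N)/q"
    define \<gamma> where "\<gamma> = (b - p + real N)/p"
    have res: "(\<alpha>-\<beta>)/(\<gamma>-\<beta>) \<in> {0..1} \<and> (\<alpha>-\<beta>)/(\<gamma>-\<beta>)*((real N/p - 1)-real N/q) \<le> real N/r - real N/q"
      unfolding \<alpha>_def \<beta>_def \<gamma>_def by (rule real_main_ne[OF H]) (use ne in auto)
    have gb: "\<gamma> - \<beta> \<noteq> 0" using ne by (simp add: \<beta>_def \<gamma>_def)
    have th: "theta N a b q p r c = (\<alpha>-\<beta>)/(\<gamma>-\<beta>)"
    proof -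
      have n: "c - c0 N a q r = r * (\<alpha> - \<beta>)" using r q by (simp add: c0_def \<alpha>_def \<beta>_def field_simps)
      have d: "c1 N b p r - c0 N a q r = r * (\<gamma> - \<beta>)" using r q p0 by (simp add: c0_def c1_def \<gamma>_def \<beta>_def field_simps)
      show ?thesis unfolding theta_def n d using r by simp
    qed
    define \<theta> where "\<theta> = (\<alpha>-\<beta>)/(\<gamma>-\<beta>)"
    have th01: "0 \<le> \<theta>" "\<theta> \<le> 1" using res by (auto simp: \<theta>_def)
    have "real N * (\<theta> * (1/p - 1/real N - 1/q)) \<le> real N * (1/r - 1/q)"
    proof -
      have "real N * (\<theta> * (1/p - 1/real N - 1/q)) = \<theta> * ((real N/p - 1) - real N/q)"
        using Npos by (simp add: field_simps)
      also have "\<dots> \<le> real N/r - real N/q" using res by (simp add: \<theta>_def)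
      also have "\<dots> = real N * (1/r - 1/q)" by (simp add: field_simps)
      finally show ?thesis .
    qed
    hence ineq: "\<theta> * (1/p - 1/real N - 1/q) \<le> 1/r - 1/q" using Npos by simp
    have rmax: "ereal r \<le> max (sob_exp p N) (ereal q)"
    proof (cases "real N \<le> p")
      case True thus ?thesis by (simp add: sob_exp_def)
    next
      case False
      hence pN: "p < real N" by simp
      note S = sob_inv[OF p0 pN]
      have "min (1/q) (1/(real N * p / (real N - p))) \<le> (1 - \<theta>) * (1/q) + \<theta> * (1/(real N * p / (real N - p)))"
        by (rule conv_min[OF th01])
      also have "\<dots> = 1/q + \<theta> * (1/p - 1/real N - 1/q)" unfolding S(3) by (simp add: algebra_simps add_divide_distrib[symmetric])
      also have "\<dots> \<le> 1/r" using ineq by linarith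
      finally show ?thesis unfolding S(1) by (rule final_r[OF q r S(2)])
    qed
    show "theta N a b q p r c \<in> {0..1}" using res th by simp
    show "theta N a b q p r c * (1/p - 1/real N - 1/q) \<le> 1/r - 1/q" using ineq th by (simp add: \<theta>_def)
    show "ereal r \<le> max (sob_exp p N) (ereal q)" by (rule rmax)
  }
  {
    assume eq: "(a + real N) / q = (b - p + real N) / p" and cc: "c = c0 N a q r" and W: "W_embeds TYPE('a) a b q p c r"
    obtain K where H: "\<And>R t. 0 < R \<Longrightarrow> 0 < t \<Longrightarrow> t \<le> 1/2 \<Longrightarrow>
      t powr (real N/r) * R powr ((c + real N)/r) \<le> K * (t powr (real N/q) * R powr ((a + real N)/q)
      + t powr (real N/p - 1) * R powr ((b - p + real N)/p))"
      using key_ineq[OF p q r W] unfolding N_def by blast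
    have H1: "t powr (real N/r) \<le> K * (t powr (real N/q) + t powr (real N/p - 1))" if "0 < t" "t \<le> 1/2" for t
      using H[of 1 t] that by simp
    have m: "min (real N/q) (real N/p - 1) \<le> real N/r" by (rule real_main_eq[OF H1])
    show "ereal r \<le> max (sob_exp p N) (ereal q)"
    proof (cases "real N \<le> p")
      case True thus ?thesis by (simp add: sob_exp_def)
    next
      case False
      hence pN: "p < real N" by simp
      note S = sob_inv[OF p0 pN]
      have "real N * min (1/q) (1/(real N * p / (real N - p))) = min (real N/q) (real N/p - 1)"
      proof -
        have e2: "real N * (1/p - 1/real N) = real N/p - 1" using Npos by (simp add: field_simps)
        have "real N * min (1/q) (1/p - 1/real N) = min (real N * (1/q)) (real N * (1/p - 1/real N))"
          using Npos by (simp only: min_mult_distrib_left) simp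
        thus ?thesis unfolding S(3) e2 by simp
      qed
      also have "\<dots> \<le> real N * (1/r)" using m by simp
      finally have "min (1/q) (1/(real N * p / (real N - p))) \<le> 1/r"
        using Npos by (simp only: mult_le_cancel_left_pos)
      thus ?thesis unfolding S(1) by (rule final_r[OF q r S(2)])
    qed
  }
qed


end
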